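(* Let $A\in\mathbb{R}^{n\times n}$, $B\in\mathbb{R}^{n\times m}$, $0\le\gamma\le1$, $D\in\mathbb{S}^n$, $E\in\mathbb{S}^m$, $d\in\mathbb{R}^n$, $K^\dagger\in\mathbb{R}^{m\times n}$ and $k^\dagger\in\mathbb{R}^m$ be given. Then the optimization problem $$\begin{aligned}\min_{\tilde D,\tilde d,\tilde E,P,h}\ & \|\tilde D-D\|_F+\|\tilde d-d\|_2+\|\tilde E-E\|_F\\ \text{s.t. }\ & P=\tilde D+\gamma A'PA-{K^\dagger}'(\tilde E+\gamma B'PB)K^\dagger,\\ & (\tilde E+\gamma B'PB)K^\dagger=-\gamma B'PA,\\ & h=\tilde d+\gamma(A+BK^\dagger)'h,\\ & 2(\tilde E+\gamma B'PB)k^\dagger=-\gamma B'h,\\ & P\succeq0,\ \tilde D\succ0,\ \tilde E\succ0,\end{aligned}$$ over symmetric $\tilde D\in\mathbb{S}^n$, $P\in\mathbb{S}^n$, $\tilde E\in\mathbb{S}^m$ and vectors $\tilde d,h\in\mathbb{R}^n$, is convex.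
   Context: Prime denotes transpose; $\|\cdot\|_F$ is the Frobenius norm; $\mathbb{S}^n$ is the set of real symmetric $n\times n$ matrices; $\succeq0$ ($\succ0$) means positive semidefinite (definite). This is the attacker's problem of finding minimally changed cost parameters making the affine policy $u=K^\dagger x+k^\dagger$ optimal for the discounted LQG problem. *)

theory Defs
  imports "HOL-Analysis.Analysis"
begin

definition frob_norm :: "real^'n^'m \<Rightarrow> real" where
  "frob_norm M = sqrt (\<Sum>i\<in>UNIV. \<Sum>j\<in>UNIV. (M $ i $ j)^2)"

definition symmetric_mat :: "real^'n^'n \<Rightarrow> bool" where
  "symmetric_mat M \<longleftrightarrow> transpose M = M"

definition psd :: "real^'n^'n \<Rightarrow> bool" where
  "psd M \<longleftrightarrow> symmetric_mat M \<and> (\<forall>x. x \<bullet> (M *v x) \<ge> 0)"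

definition pd :: "real^'n^'n \<Rightarrow> bool" where
  "pd M \<longleftrightarrow> symmetric_mat M \<and> (\<forall>x. x \<noteq> 0 \<longrightarrow> x \<bullet> (M *v x) > 0)"

definition convex_problem :: "('a::real_vector \<Rightarrow> real) \<Rightarrow> 'a set \<Rightarrow> bool" where
  "convex_problem f S \<longleftrightarrow> convex S \<and> convex_on S f"

definition attack_objective ::
  "real^'n^'n \<Rightarrow> real^'n \<Rightarrow> real^'m^'m \<Rightarrow>
   ((real^'n^'n) \<times> (real^'n) \<times> (real^'m^'m) \<times> (real^'n^'n) \<times> (real^'n)) \<Rightarrow> real" where
  "attack_objective D d E =
     (\<lambda>(Dt, dt, Et, (P::real^'n^'n), (h::real^'n)).
       frob_norm (Dt - D) + norm (dt - d) + frob_norm (Et - E))"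

definition attack_feasible ::
  "real^'n^'n \<Rightarrow> real^'m^'n \<Rightarrow> real \<Rightarrow> real^'n^'m \<Rightarrow> real^'m \<Rightarrow>
   ((real^'n^'n) \<times> (real^'n) \<times> (real^'m^'m) \<times> (real^'n^'n) \<times> (real^'n)) set" where
  "attack_feasible A B \<gamma> K k = {(Dt, dt, Et, P, h).
     symmetric_mat Dt \<and> symmetric_mat P \<and> symmetric_mat Et \<and>
     P = Dt + \<gamma> *\<^sub>R (transpose A ** P ** A)
           - transpose K ** (Et + \<gamma> *\<^sub>R (transpose B ** P ** B)) ** K \<and>
     (Et + \<gamma> *\<^sub>R (transpose B ** P ** B)) ** K = - (\<gamma> *\<^sub>R (transpose B ** P ** A)) \<and>
     h = dt + \<gamma> *\<^sub>R (transpose (A + B ** K) *v h) \<and>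
     2 *\<^sub>R ((Et + \<gamma> *\<^sub>R (transpose B ** P ** B)) *v k) = - (\<gamma> *\<^sub>R (transpose B *v h)) \<and>
     psd P \<and> pd Dt \<and> pd Et}"

end

theory Submission
  imports Defs
begin

lemma mm_ladd: "((A::real^'n^'m) + B) ** (C::real^'p^'n) = A ** C + B ** C"
  by (simp add: vec_eq_iff matrix_matrix_mult_def sum.distrib algebra_simps)

lemma mm_lscale: "((c::real) *\<^sub>R (A::real^'n^'m)) ** (C::real^'p^'n) = c *\<^sub>R (A ** C)"
  by (simp add: scalar_matrix_assoc)

lemma mm_rscale: "(A::real^'n^'m) ** ((c::real) *\<^sub>R (C::real^'p^'n)) = c *\<^sub>R (A ** C)"
  by (simp add: vec_eq_iff matrix_matrix_mult_def sum_distrib_left algebra_simps)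

lemma tr_add: "transpose ((A::real^'n^'m) + B) = transpose A + transpose B"
  by (simp add: vec_eq_iff transpose_def)

lemma mv_lscale: "((c::real) *\<^sub>R (A::real^'n^'m)) *v x = c *\<^sub>R (A *v x)"
  by (simp add: scaleR_matrix_vector_assoc)

lemma inner_mix: "x \<bullet> ((a *\<^sub>R (M::real^'n^'n) + b *\<^sub>R N) *v x) = a * (x \<bullet> (M *v x)) + b * (x \<bullet> (N *v x))"
  by (simp add: matrix_vector_mult_add_rdistrib mv_lscale inner_add_right)

lemma sym_mix: "symmetric_mat M \<Longrightarrow> symmetric_mat N \<Longrightarrow> symmetric_mat (a *\<^sub>R (M::real^'n^'n) + b *\<^sub>R N)"
  by (simp add: symmetric_mat_def tr_add transpose_scalar)

lemma pos_mix: "(a::real) > 0 \<Longrightarrow> b > 0 \<Longrightarrow> 0 \<le> u \<Longrightarrow> u \<le> 1 \<Longrightarrow> (1 - u) * a + u * b > 0"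
proof (cases "u = 0")
  case False
  assume "a > 0" "b > 0" "0 \<le> u" "u \<le> 1"
  then have "u * b > 0" "(1 - u) * a \<ge> 0" using False by auto
  then show ?thesis by linarith
qed simp

lemma frob_eq: "frob_norm M = norm M"
  by (simp add: frob_norm_def norm_vec_def L2_set_def sum_nonneg)

lemma norm_mix: "t \<ge> 0 \<Longrightarrow> t \<le> 1 \<Longrightarrow> norm ((1 - t) *\<^sub>R x + t *\<^sub>R y - c) \<le> (1 - t) * norm (x - c) + t * norm (y - c)"
proof -
  assume "t \<ge> 0" "t \<le> 1"
  have "(1 - t) *\<^sub>R x + t *\<^sub>R y - c = (1 - t) *\<^sub>R (x - c) + t *\<^sub>R (y - c)"
    by (simp add: algebra_simps)
  also have "norm \<dots> \<le> norm ((1 - t) *\<^sub>R (x - c)) + norm (t *\<^sub>R (y - c))" by (rule norm_triangle_ineq)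
  also have "\<dots> = (1 - t) * norm (x - c) + t * norm (y - c)" using \<open>t \<ge> 0\<close> \<open>t \<le> 1\<close> by simp
  finally show ?thesis .
qed

lemma mm_ldiff: "((A::real^'n^'m) - B) ** (C::real^'p^'n) = A ** C - B ** C"
  by (simp add: vec_eq_iff matrix_matrix_mult_def sum_subtractf algebra_simps)

lemma mm_rdiff: "(A::real^'n^'m) ** ((B::real^'p^'n) - C) = A ** B - A ** C"
  by (simp add: vec_eq_iff matrix_matrix_mult_def sum_subtractf algebra_simps)

theorem proposition3:
  fixes A :: "real^'n^'n" and B :: "real^'m^'n" and \<gamma> :: real
    and D :: "real^'n^'n" and E :: "real^'m^'m" and d :: "real^'n"
    and K :: "real^'n^'m" and k :: "real^'m"
  assumes "0 \<le> \<gamma>" and "\<gamma> \<le> 1"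
    and "symmetric_mat D" and "symmetric_mat E"
  shows "convex_problem (attack_objective D d E) (attack_feasible A B \<gamma> K k)"
proof -
  let ?S = "attack_feasible A B \<gamma> K k"
  have cvx: "convex ?S"
    unfolding convex_alt
  proof (intro ballI allI impI)
    fix x y :: "(real^'n^'n) \<times> (real^'n) \<times> (real^'m^'m) \<times> (real^'n^'n) \<times> (real^'n)" and u :: real
    assume x: "x \<in> ?S" and y: "y \<in> ?S" and u: "0 \<le> u \<and> u \<le> 1"
    obtain Dt1 dt1 Et1 P1 h1 where xe: "x = (Dt1, dt1, Et1, P1, h1)" by (cases x) auto
    obtain Dt2 dt2 Et2 P2 h2 where ye: "y = (Dt2, dt2, Et2, P2, h2)" by (cases y) auto
    let ?a = "1 - u"
    note X = x[unfolded xe attack_feasible_def, simplified]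
    note Y = y[unfolded ye attack_feasible_def, simplified]
    define Dt where "Dt = ?a *\<^sub>R Dt1 + u *\<^sub>R Dt2"
    define dt where "dt = ?a *\<^sub>R dt1 + u *\<^sub>R dt2"
    define Et where "Et = ?a *\<^sub>R Et1 + u *\<^sub>R Et2"
    define P where "P = ?a *\<^sub>R P1 + u *\<^sub>R P2"
    define h where "h = ?a *\<^sub>R h1 + u *\<^sub>R h2"
    note defs = Dt_def dt_def Et_def P_def h_def
    note ls = mm_ladd mm_lscale mm_rscale matrix_add_ldistrib tr_add mm_ldiff mm_rdiff
       matrix_vector_mult_add_rdistrib mv_lscale matrix_vector_right_distrib matrix_vector_mult_scaleR
    have e1: "(Dt + \<gamma> *\<^sub>R (transpose A ** P ** A)
           - transpose K ** (Et + \<gamma> *\<^sub>R (transpose B ** P ** B)) ** K) - P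
       = ?a *\<^sub>R ((Dt1 + \<gamma> *\<^sub>R (transpose A ** P1 ** A)
           - transpose K ** (Et1 + \<gamma> *\<^sub>R (transpose B ** P1 ** B)) ** K) - P1)
       + u *\<^sub>R ((Dt2 + \<gamma> *\<^sub>R (transpose A ** P2 ** A)
           - transpose K ** (Et2 + \<gamma> *\<^sub>R (transpose B ** P2 ** B)) ** K) - P2)"
      unfolding defs by (simp add: ls algebra_simps)
    have e2: "(Et + \<gamma> *\<^sub>R (transpose B ** P ** B)) ** K + (\<gamma> *\<^sub>R (transpose B ** P ** A))
      = ?a *\<^sub>R ((Et1 + \<gamma> *\<^sub>R (transpose B ** P1 ** B)) ** K + (\<gamma> *\<^sub>R (transpose B ** P1 ** A)))
      + u *\<^sub>R ((Et2 + \<gamma> *\<^sub>R (transpose B ** P2 ** B)) ** K + (\<gamma> *\<^sub>R (transpose B ** P2 ** A)))"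
      unfolding defs by (simp add: ls algebra_simps)
    have e3: "(dt + \<gamma> *\<^sub>R (transpose (A + B ** K) *v h)) - h
      = ?a *\<^sub>R ((dt1 + \<gamma> *\<^sub>R (transpose (A + B ** K) *v h1)) - h1)
      + u *\<^sub>R ((dt2 + \<gamma> *\<^sub>R (transpose (A + B ** K) *v h2)) - h2)"
      unfolding defs by (simp add: ls algebra_simps matrix_vector_mult_diff_distrib)
    have e4: "2 *\<^sub>R ((Et + \<gamma> *\<^sub>R (transpose B ** P ** B)) *v k) + (\<gamma> *\<^sub>R (transpose B *v h))
      = ?a *\<^sub>R (2 *\<^sub>R ((Et1 + \<gamma> *\<^sub>R (transpose B ** P1 ** B)) *v k) + (\<gamma> *\<^sub>R (transpose B *v h1)))
      + u *\<^sub>R (2 *\<^sub>R ((Et2 + \<gamma> *\<^sub>R (transpose B ** P2 ** B)) *v k) + (\<gamma> *\<^sub>R (transpose B *v h2)))"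
      unfolding defs by (simp add: ls algebra_simps)
    have z1: "(Dt + \<gamma> *\<^sub>R (transpose A ** P ** A)
           - transpose K ** (Et + \<gamma> *\<^sub>R (transpose B ** P ** B)) ** K) - P = 0"
      unfolding e1 using X Y by simp
    have z2: "(Et + \<gamma> *\<^sub>R (transpose B ** P ** B)) ** K + (\<gamma> *\<^sub>R (transpose B ** P ** A)) = 0"
      unfolding e2 using X Y by (simp add: eq_neg_iff_add_eq_0)
    have z3: "(dt + \<gamma> *\<^sub>R (transpose (A + B ** K) *v h)) - h = 0"
      unfolding e3 using X Y by simp
    have z4: "2 *\<^sub>R ((Et + \<gamma> *\<^sub>R (transpose B ** P ** B)) *v k) + (\<gamma> *\<^sub>R (transpose B *v h)) = 0"
      unfolding e4 using X Y by (simp add: eq_neg_iff_add_eq_0)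
    have s: "symmetric_mat Dt" "symmetric_mat P" "symmetric_mat Et"
      unfolding defs using X Y by (auto intro: sym_mix)
    have ps: "psd P" unfolding psd_def
    proof
      show "symmetric_mat P" by fact
      show "\<forall>z. 0 \<le> z \<bullet> (P *v z)"
      proof
        fix z
        have "0 \<le> z \<bullet> (P1 *v z)" "0 \<le> z \<bullet> (P2 *v z)" using X Y by (auto simp: psd_def)
        then show "0 \<le> z \<bullet> (P *v z)" unfolding P_def inner_mix using u by simp
      qed
    qed
    have pdD: "pd Dt" unfolding pd_def
    proof (intro conjI allI impI)
      show "symmetric_mat Dt" by fact
      fix z :: "real^'n" assume "z \<noteq> 0"
      then have "0 < z \<bullet> (Dt1 *v z)" "0 < z \<bullet> (Dt2 *v z)" using X Y by (auto simp: pd_def)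
      then show "0 < z \<bullet> (Dt *v z)" unfolding Dt_def inner_mix using u by (intro pos_mix) auto
    qed
    have pdE: "pd Et" unfolding pd_def
    proof (intro conjI allI impI)
      show "symmetric_mat Et" by fact
      fix z :: "real^'m" assume "z \<noteq> 0"
      then have "0 < z \<bullet> (Et1 *v z)" "0 < z \<bullet> (Et2 *v z)" using X Y by (auto simp: pd_def)
      then show "0 < z \<bullet> (Et *v z)" unfolding Et_def inner_mix using u by (intro pos_mix) auto
    qed
    have "(Dt, dt, Et, P, h) \<in> ?S"
      unfolding attack_feasible_def using s ps pdD pdE z1 z2 z3 z4
      by (simp add: eq_neg_iff_add_eq_0)
    then show "?a *\<^sub>R x + u *\<^sub>R y \<in> ?S"
      by (simp add: xe ye defs)
  qed
  have obj: "convex_on ?S (attack_objective D d E)"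
  proof (rule convex_onI[OF _ cvx])
    fix t :: real and x y :: "(real^'n^'n) \<times> (real^'n) \<times> (real^'m^'m) \<times> (real^'n^'n) \<times> (real^'n)"
    assume t: "0 < t" "t < 1"
    obtain Dt1 dt1 Et1 P1 h1 where xe: "x = (Dt1, dt1, Et1, P1, h1)" by (cases x) auto
    obtain Dt2 dt2 Et2 P2 h2 where ye: "y = (Dt2, dt2, Et2, P2, h2)" by (cases y) auto
    have "norm ((1 - t) *\<^sub>R Dt1 + t *\<^sub>R Dt2 - D) \<le> (1 - t) * norm (Dt1 - D) + t * norm (Dt2 - D)"
      "norm ((1 - t) *\<^sub>R dt1 + t *\<^sub>R dt2 - d) \<le> (1 - t) * norm (dt1 - d) + t * norm (dt2 - d)"
      "norm ((1 - t) *\<^sub>R Et1 + t *\<^sub>R Et2 - E) \<le> (1 - t) * norm (Et1 - E) + t * norm (Et2 - E)"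
      using t by (intro norm_mix; simp)+
    then show "attack_objective D d E ((1 - t) *\<^sub>R x + t *\<^sub>R y)
          \<le> (1 - t) * attack_objective D d E x + t * attack_objective D d E y"
      by (simp add: xe ye attack_objective_def frob_eq algebra_simps)
  qed
  show ?thesis unfolding convex_problem_def using cvx obj by simp
qed

end
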